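(* Let $U\subseteq\mathbb{R}^d$ be an open convex set, let $f$ be a convex function finite on $U$ with $f_U:=\inf_{x'\in U}f(x')$ finite, let $g(\cdot)$ be a deterministic subgradient oracle ($g(x)\in\partial f(x)$ for each $x$), and let $L_0\ge0$, $L_1>0$. Then $$\|g(x)\|^2\le L_0^2+L_1(f(x)-f_U)\qquad\text{for all }x\in U$$ holds if and only if, for each $x\in U$, $$f(y)\le f(x)+\frac{L_1}{4}\|y-x\|^2+\|y-x\|\sqrt{L_1(f(x)-f_U)+L_0^2}\qquad\text{for all }y\in U.$$
   Context: $\partial f(x)=\{g: f(y)\ge f(x)+g^T(y-x)\ \forall y\}$; the oracle returns an arbitrary element of it. *)

theory Defs
  imports "HOL-Analysis.Analysis"
begin

definition subdifferential :: "('a::euclidean_space \<Rightarrow> real) \<Rightarrow> 'a set \<Rightarrow> 'a \<Rightarrow> 'a set" where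
  "subdifferential f U x = {g. \<forall>y\<in>U. f y \<ge> f x + g \<bullet> (y - x)}"

end

theory Submission
  imports Defs
begin

lemma step_ineq:
  fixes a b K d :: real
  assumes "d > 0" "a \<ge> d" "K \<ge> 0" "b\<^sup>2 - a\<^sup>2 \<le> K * b"
  shows "b \<le> a + K/2 + K\<^sup>2/(8*d)"
proof -
  have a0: "a > 0" using assms by linarith
  have e1: "K\<^sup>2/(8*a) \<le> K\<^sup>2/(8*d)"
    using assms a0 by (intro divide_left_mono) (auto simp: mult_pos_pos)
  have "b \<le> a + K/2 + K\<^sup>2/(8*a)"
  proof (rule ccontr)
    assume "\<not> ?thesis"
    hence h: "b - K/2 > a + K\<^sup>2/(8*a)" by simp
    have p: "a + K\<^sup>2/(8*a) > 0" using a0 by (simp add: add_pos_nonneg)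
    have "(b - K/2)\<^sup>2 > (a + K\<^sup>2/(8*a))\<^sup>2"
      using h p by (intro power_strict_mono) auto
    moreover have "(a + K\<^sup>2/(8*a))\<^sup>2 \<ge> a\<^sup>2 + K\<^sup>2/4"
    proof -
      have "(a + K\<^sup>2/(8*a))\<^sup>2 = a\<^sup>2 + K\<^sup>2/4 + (K\<^sup>2/(8*a))\<^sup>2"
        using a0 by (simp add: power2_eq_square field_simps)
      thus ?thesis by simp
    qed
    ultimately have "(b - K/2)\<^sup>2 > a\<^sup>2 + K\<^sup>2/4" by linarith
    moreover have "(b - K/2)\<^sup>2 = b\<^sup>2 - K*b + K\<^sup>2/4" by (simp add: power2_eq_square algebra_simps)
    ultimately show False using assms(4) by linarith
  qed
  thus ?thesis using e1 by linarith
qed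

lemma seq_bound:
  fixes a :: "nat \<Rightarrow> real"
  assumes "\<forall>k\<le>N. a k \<ge> d" "d > 0" "K \<ge> 0"
    "\<forall>k<N. (a (Suc k))\<^sup>2 - (a k)\<^sup>2 \<le> K * a (Suc k)"
  shows "a N \<le> a 0 + real N * (K/2 + K\<^sup>2/(8*d))"
  using assms
proof (induction N)
  case 0 then show ?case by simp
next
  case (Suc n)
  have ih: "a n \<le> a 0 + real n * (K/2 + K\<^sup>2/(8*d))" using Suc by auto
  have "a (Suc n) \<le> a n + K/2 + K\<^sup>2/(8*d)"
    using Suc.prems by (intro step_ineq) auto
  moreover have "real (Suc n) * (K/2 + K\<^sup>2/(8*d)) = real n * (K/2 + K\<^sup>2/(8*d)) + (K/2 + K\<^sup>2/(8*d))"
    by (simp add: distrib_right)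
  ultimately show ?case using ih by linarith
qed

lemma fwd_eps:
  fixes U :: "'a::euclidean_space set" and f :: "'a \<Rightarrow> real" and g :: "'a \<Rightarrow> 'a"
  assumes cU: "convex U" and xU: "x \<in> U" and yU: "y \<in> U"
    and lb: "\<forall>z\<in>U. f z \<ge> m"
    and sg: "\<forall>z\<in>U. g z \<in> subdifferential f U z"
    and gb: "\<forall>z\<in>U. (norm (g z))\<^sup>2 \<le> L0\<^sup>2 + L1 * (f z - m)"
    and L1: "L1 > 0" and ep: "e > 0"
  shows "f y \<le> f x + L1 / 4 * (norm (y - x))\<^sup>2
              + norm (y - x) * sqrt (L1 * (f x - m) + L0\<^sup>2 + e\<^sup>2)"
proof -
  define r where "r = norm (y - x)"
  define d where "d = sqrt (L0\<^sup>2 + e\<^sup>2)"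
  define psi where "psi = (\<lambda>z. sqrt (L0\<^sup>2 + e\<^sup>2 + L1 * (f z - m)))"
  have d0: "d > 0" unfolding d_def using ep by (simp add: add_nonneg_pos)
  have nn: "L1 * (f z - m) \<ge> 0" if "z \<in> U" for z
    using bspec[OF lb that] L1 by simp
  have psi_ge: "psi z \<ge> d" if "z \<in> U" for z
    unfolding psi_def d_def using nn[OF that] by (intro real_sqrt_le_mono) linarith
  have psi_sq: "(psi z)\<^sup>2 = L0\<^sup>2 + e\<^sup>2 + L1 * (f z - m)" if "z \<in> U" for z
  proof -
    have "L0\<^sup>2 + e\<^sup>2 + L1 * (f z - m) \<ge> 0" using nn[OF that] zero_le_power2[of L0] zero_le_power2[of e] by linarith
    thus ?thesis unfolding psi_def by (rule real_sqrt_pow2)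
  qed
  have gpsi: "norm (g z) \<le> psi z" if "z \<in> U" for z
  proof -
    have "(norm (g z))\<^sup>2 \<le> (psi z)\<^sup>2" using bspec[OF gb that] psi_sq[OF that] zero_le_power2[of e] by linarith
    moreover have "0 \<le> psi z" using psi_ge[OF that] d0 by linarith
    ultimately show ?thesis by (rule power2_le_imp_le)
  qed
  have key: "psi y \<le> psi x + L1 * r / 2 + (L1 * r)\<^sup>2 / (8 * d) / real N" if N: "N \<ge> 1" for N :: nat
  proof -
    define z where "z = (\<lambda>k::nat. x + (real k / real N) *\<^sub>R (y - x))"
    have zU: "z k \<in> U" if "k \<le> N" for k
    proof -
      have "(1 - real k / real N) *\<^sub>R x + (real k / real N) *\<^sub>R y \<in> U"
        using cU xU yU that N unfolding convex_alt by auto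
      moreover have "(1 - real k / real N) *\<^sub>R x + (real k / real N) *\<^sub>R y = z k"
        unfolding z_def by (simp add: algebra_simps)
      ultimately show ?thesis by simp
    qed
    define K where "K = L1 * r / real N"
    have K0: "K \<ge> 0" unfolding K_def r_def using L1 by simp
    have st: "(psi (z (Suc k)))\<^sup>2 - (psi (z k))\<^sup>2 \<le> K * psi (z (Suc k))" if k: "k < N" for k
    proof -
      have U1: "z (Suc k) \<in> U" and U0: "z k \<in> U" using zU k by auto
      have "f (z k) \<ge> f (z (Suc k)) + g (z (Suc k)) \<bullet> (z k - z (Suc k))"
        using sg U1 U0 unfolding subdifferential_def by auto
      moreover have "- (g (z (Suc k)) \<bullet> (z k - z (Suc k))) \<le> norm (g (z (Suc k))) * norm (z k - z (Suc k))"
        using norm_cauchy_schwarz[of "g (z (Suc k))" "-(z k - z (Suc k))"] by (simp only: inner_minus_right norm_minus_cancel)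
      moreover have "z k - z (Suc k) = - (1 / real N) *\<^sub>R (y - x)"
        unfolding z_def using N by (simp add: algebra_simps add_divide_distrib scaleR_add_left)
      hence "norm (z k - z (Suc k)) = r / real N" unfolding r_def by simp
      ultimately have "f (z (Suc k)) - f (z k) \<le> norm (g (z (Suc k))) * (r / real N)" by simp
      also have "\<dots> \<le> psi (z (Suc k)) * (r / real N)"
        using gpsi[OF U1] r_def by (intro mult_right_mono) auto
      finally have "L1 * (f (z (Suc k)) - f (z k)) \<le> L1 * (psi (z (Suc k)) * (r / real N))"
        using L1 by (intro mult_left_mono) auto
      thus ?thesis using psi_sq[OF U1] psi_sq[OF U0] unfolding K_def by (simp add: algebra_simps)
    qed
    have "psi (z N) \<le> psi (z 0) + real N * (K/2 + K\<^sup>2/(8*d))"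
      using seq_bound[where N=N and a="\<lambda>k. psi (z k)" and d=d and K=K] st K0 d0 psi_ge zU by auto
    moreover have "z N = y" "z 0 = x" unfolding z_def using N by auto
    moreover have "real N * (K/2 + K\<^sup>2/(8*d)) = L1 * r / 2 + (L1 * r)\<^sup>2 / (8 * d) / real N"
      unfolding K_def using N by (simp add: field_simps power2_eq_square)
    ultimately show ?thesis by simp
  qed
  have main: "psi y \<le> psi x + L1 * r / 2"
  proof (rule ccontr)
    assume "\<not> ?thesis"
    hence gap: "psi y - psi x - L1 * r / 2 > 0" by simp
    define C where "C = (L1 * r)\<^sup>2 / (8 * d)"
    have C0: "C \<ge> 0" unfolding C_def using d0 by simp
    obtain N :: nat where N: "real N > C / (psi y - psi x - L1 * r / 2)" using reals_Archimedean2 by blast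
    have N1: "N \<ge> 1"
    proof -
      have "C / (psi y - psi x - L1 * r / 2) \<ge> 0" using C0 gap by simp
      thus ?thesis using N by (cases N) auto
    qed
    have "C / real N < psi y - psi x - L1 * r / 2"
      using N N1 gap by (simp add: field_simps)
    thus False using key[OF N1] unfolding C_def by linarith
  qed
  have px0: "psi x \<ge> 0" using psi_ge[OF xU] d0 by simp
  have "(psi y)\<^sup>2 \<le> (psi x + L1 * r / 2)\<^sup>2"
    using main psi_ge[OF yU] d0 by (intro power_mono) auto
  hence "L1 * (f y - m) \<le> L1 * (f x - m) + L1 * r * psi x + (L1 * r)\<^sup>2 / 4"
    using psi_sq[OF xU] psi_sq[OF yU] by (simp add: power2_eq_square algebra_simps)
  hence "L1 * (f y - f x) \<le> L1 * (r * psi x + L1 * r\<^sup>2 / 4)"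
    by (simp add: power2_eq_square algebra_simps)
  hence "f y - f x \<le> r * psi x + L1 * r\<^sup>2 / 4" using L1 by simp
  moreover have "psi x = sqrt (L1 * (f x - m) + L0\<^sup>2 + e\<^sup>2)" unfolding psi_def by (simp add: algebra_simps)
  ultimately show ?thesis unfolding r_def by (simp add: algebra_simps)
qed

lemma sqrt_add_sq_le:
  fixes A e :: real
  assumes "A \<ge> 0" "e \<ge> 0"
  shows "sqrt (A + e\<^sup>2) \<le> sqrt A + e"
proof -
  have "A + e\<^sup>2 \<le> (sqrt A + e)\<^sup>2"
    using assms by (simp add: power2_eq_square algebra_simps real_sqrt_mult_self)
  hence "sqrt (A + e\<^sup>2) \<le> sqrt ((sqrt A + e)\<^sup>2)" by (rule real_sqrt_le_mono)
  also have "\<dots> = sqrt A + e" using assms by simp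
  finally show ?thesis .
qed

theorem proposition2p6:
  fixes U :: "'a::euclidean_space set" and f :: "'a \<Rightarrow> real" and g :: "'a \<Rightarrow> 'a"
    and L0 L1 :: real
  assumes "open U" and "convex U" and "U \<noteq> {}"
    and "convex_on U f"
    and "bdd_below (f ` U)"
    and "\<forall>x\<in>U. g x \<in> subdifferential f U x"
    and "L0 \<ge> 0" and "L1 > 0"
  shows "(\<forall>x\<in>U. (norm (g x))\<^sup>2 \<le> L0\<^sup>2 + L1 * (f x - (INF x'\<in>U. f x'))) \<longleftrightarrow>
         (\<forall>x\<in>U. \<forall>y\<in>U. f y \<le> f x + L1 / 4 * (norm (y - x))\<^sup>2
              + norm (y - x) * sqrt (L1 * (f x - (INF x'\<in>U. f x')) + L0\<^sup>2))"
proof -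
  define m where "m = (INF x'\<in>U. f x')"
  have lb: "\<forall>z\<in>U. f z \<ge> m" unfolding m_def using assms(5) by (auto intro: cINF_lower)
  have Anon: "L1 * (f z - m) + L0\<^sup>2 \<ge> 0" if "z \<in> U" for z
  proof -
    have "L1 * (f z - m) \<ge> 0" using bspec[OF lb that] assms(8) by simp
    thus ?thesis using zero_le_power2[of L0] by linarith
  qed
  have "(\<forall>x\<in>U. (norm (g x))\<^sup>2 \<le> L0\<^sup>2 + L1 * (f x - m)) \<longleftrightarrow>
         (\<forall>x\<in>U. \<forall>y\<in>U. f y \<le> f x + L1 / 4 * (norm (y - x))\<^sup>2
              + norm (y - x) * sqrt (L1 * (f x - m) + L0\<^sup>2))"
  proof
    assume gb: "\<forall>x\<in>U. (norm (g x))\<^sup>2 \<le> L0\<^sup>2 + L1 * (f x - m)"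
    show "\<forall>x\<in>U. \<forall>y\<in>U. f y \<le> f x + L1 / 4 * (norm (y - x))\<^sup>2
              + norm (y - x) * sqrt (L1 * (f x - m) + L0\<^sup>2)"
    proof (intro ballI)
      fix x y assume xU: "x \<in> U" and yU: "y \<in> U"
      define r where "r = norm (y - x)"
      define A where "A = L1 * (f x - m) + L0\<^sup>2"
      show "f y \<le> f x + L1 / 4 * (norm (y - x))\<^sup>2 + norm (y - x) * sqrt (L1 * (f x - m) + L0\<^sup>2)"
      proof (cases "r = 0")
        case True
        then have "y = x" unfolding r_def by simp
        then show ?thesis by simp
      next
        case False
        then have r0: "r > 0" unfolding r_def by simp
        show ?thesis
        proof (rule field_le_epsilon)
          fix e :: real assume e0: "0 < e"
          have "f y \<le> f x + L1 / 4 * r\<^sup>2 + r * sqrt (A + (e / r)\<^sup>2)"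
            using fwd_eps[OF assms(2) xU yU lb assms(6) gb assms(8), of "e / r"] e0 r0
            unfolding r_def A_def by (simp add: algebra_simps)
          also have "r * sqrt (A + (e / r)\<^sup>2) \<le> r * (sqrt A + e / r)"
            using sqrt_add_sq_le[of A "e / r"] Anon[OF xU] e0 r0 unfolding A_def
            by (intro mult_left_mono) auto
          also have "r * (sqrt A + e / r) = r * sqrt A + e" using r0 by (simp add: field_simps)
          finally show "f y \<le> f x + L1 / 4 * (norm (y - x))\<^sup>2 + norm (y - x) * sqrt (L1 * (f x - m) + L0\<^sup>2) + e"
            unfolding r_def A_def by simp
        qed
      qed
    qed
  next
    assume ub: "\<forall>x\<in>U. \<forall>y\<in>U. f y \<le> f x + L1 / 4 * (norm (y - x))\<^sup>2
              + norm (y - x) * sqrt (L1 * (f x - m) + L0\<^sup>2)"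
    show "\<forall>x\<in>U. (norm (g x))\<^sup>2 \<le> L0\<^sup>2 + L1 * (f x - m)"
    proof
      fix x assume xU: "x \<in> U"
      define c where "c = sqrt (L1 * (f x - m) + L0\<^sup>2)"
      have c0: "c \<ge> 0" unfolding c_def using Anon[OF xU] by simp
      have csq: "c\<^sup>2 = L0\<^sup>2 + L1 * (f x - m)" unfolding c_def using Anon[OF xU] by simp
      have "norm (g x) \<le> c"
      proof (rule ccontr)
        assume "\<not> ?thesis"
        hence gt: "norm (g x) > c" by simp
        define G where "G = norm (g x)"
        have G0: "G > 0" using gt c0 unfolding G_def by linarith
        obtain e where e0: "e > 0" and eb: "ball x e \<subseteq> U" using assms(1) xU open_contains_ball by blast
        define s where "s = min (e / (2 * G)) ((G - c) / (L1 * G))"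
        have s0: "s > 0" unfolding s_def using e0 G0 gt assms(8) unfolding G_def by simp
        define y where "y = x + s *\<^sub>R g x"
        have ny: "norm (y - x) = s * G" unfolding y_def G_def using s0 by simp
        have "s * G < e"
        proof -
          have "s * G \<le> e / (2 * G) * G" unfolding s_def using G0 by (intro mult_right_mono) auto
          also have "\<dots> = e / 2" using G0 by simp
          finally show ?thesis using e0 by linarith
        qed
        hence yU: "y \<in> U" using eb ny by (auto simp: dist_norm norm_minus_commute)
        have "f y \<ge> f x + g x \<bullet> (y - x)" using assms(6) xU yU unfolding subdifferential_def by auto
        moreover have "g x \<bullet> (y - x) = s * G\<^sup>2" unfolding y_def G_def by (simp add: power2_norm_eq_inner)
        moreover have "f y \<le> f x + L1 / 4 * (s * G)\<^sup>2 + s * G * c"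
        proof -
          have "f y \<le> f x + L1 / 4 * (norm (y - x))\<^sup>2 + norm (y - x) * sqrt (L1 * (f x - m) + L0\<^sup>2)"
            using bspec[OF bspec[OF ub xU] yU] .
          thus ?thesis by (simp only: ny c_def)
        qed
        ultimately have "s * G\<^sup>2 \<le> L1 / 4 * (s * G)\<^sup>2 + s * G * c" by linarith
        moreover have "(s * G) * G = s * G\<^sup>2" by (simp add: power2_eq_square)
        moreover have "(s * G) * (L1 / 4 * s * G + c) = L1 / 4 * (s * G)\<^sup>2 + s * G * c"
          by (simp add: power2_eq_square distrib_left)
        ultimately have "(s * G) * G \<le> (s * G) * (L1 / 4 * s * G + c)" by linarith
        hence h: "G \<le> L1 / 4 * s * G + c" using s0 G0 by (simp add: mult_le_cancel_left_pos)
        have "s \<le> (G - c) / (L1 * G)" unfolding s_def by simp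
        hence "L1 * G * s \<le> G - c" using assms(8) G0 by (simp add: field_simps)
        moreover have "L1 / 4 * s * G = (L1 * G * s) / 4" by simp
        ultimately have "L1 / 4 * s * G < G - c" using gt unfolding G_def by linarith
        thus False using h by linarith
      qed
      hence "(norm (g x))\<^sup>2 \<le> c\<^sup>2" by (rule power_mono) simp
      thus "(norm (g x))\<^sup>2 \<le> L0\<^sup>2 + L1 * (f x - m)" using csq by simp
    qed
  qed
  thus ?thesis unfolding m_def .
qed

end
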